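(* Let $\mathcal D$ be a $k$-oriented Spherical Diagram. If two arcs $a,b\in\mathcal D$ that do not lie on a common great circle have a common vanishing point, then the great circle containing $a$ does not intersect $b$, and the great circle containing $b$ does not intersect $a$.
   Context: A geodesic arc on the unit sphere in $\mathbb R^3$ is the unique shortest curve joining two non-antipodal points. An arc $a$ blocks an arc $b$ (equivalently, $b$ hits $a$) if an endpoint of $b$ lies in the relative interior of $a$. A Spherical Diagram (SD) is a finite non-empty collection $\mathcal D$ of pairwise interior-disjoint geodesic arcs on the unit sphere such that each arc of $\mathcal D$ is blocked by arcs of $\mathcal D$ at each of its endpoints. An SD $\mathcal D$ is $k$-oriented if there exist a set $P$ of $k$ points on the unit sphere (poles), no two antipodal, and a function $f\colon\mathcal D\to P$ such that each arc $a\in\mathcal D$ lies on a great circle through $f(a)$ but contains neither $f(a)$ nor its antipode $-f(a)$. The two points $f(a)$ and $-f(a)$ are the vanishing points of $a$. *)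

theory Defs
  imports "HOL-Analysis.Analysis"
begin

type_synonym point = "real^3"
type_synonym arc = "point \<times> point"

definition on_sphere :: "point \<Rightarrow> bool" where
  "on_sphere x \<longleftrightarrow> norm x = 1"

definition geodesic_arc :: "arc \<Rightarrow> bool" where
  "geodesic_arc a \<longleftrightarrow> on_sphere (fst a) \<and> on_sphere (snd a) \<and>
     fst a \<noteq> snd a \<and> fst a \<noteq> - snd a"

definition arc_set :: "arc \<Rightarrow> point set" where
  "arc_set a = {x. on_sphere x \<and>
     (\<exists>u v. u \<ge> 0 \<and> v \<ge> 0 \<and> x = u *\<^sub>R fst a + v *\<^sub>R snd a)}"

definition arc_relint :: "arc \<Rightarrow> point set" where
  "arc_relint a = {x. on_sphere x \<and>
     (\<exists>u v. u > 0 \<and> v > 0 \<and> x = u *\<^sub>R fst a + v *\<^sub>R snd a)}"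

definition great_circle :: "arc \<Rightarrow> point set" where
  "great_circle a = {x. on_sphere x \<and> x \<in> span {fst a, snd a}}"

definition blocks :: "arc \<Rightarrow> arc \<Rightarrow> bool" where
  "blocks a b \<longleftrightarrow> fst b \<in> arc_relint a \<or> snd b \<in> arc_relint a"

definition spherical_diagram :: "arc set \<Rightarrow> bool" where
  "spherical_diagram D \<longleftrightarrow> finite D \<and> D \<noteq> {} \<and>
     (\<forall>a\<in>D. geodesic_arc a) \<and>
     (\<forall>a\<in>D. \<forall>b\<in>D. a \<noteq> b \<longrightarrow> arc_relint a \<inter> arc_relint b = {}) \<and>
     (\<forall>b\<in>D. (\<exists>a\<in>D. fst b \<in> arc_relint a) \<and> (\<exists>a\<in>D. snd b \<in> arc_relint a))"

definition k_oriented_by :: "arc set \<Rightarrow> nat \<Rightarrow> point set \<Rightarrow> (arc \<Rightarrow> point) \<Rightarrow> bool" where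
  "k_oriented_by D k P f \<longleftrightarrow> spherical_diagram D \<and>
     finite P \<and> card P = k \<and> (\<forall>p\<in>P. on_sphere p) \<and>
     (\<forall>p\<in>P. \<forall>q\<in>P. p \<noteq> - q) \<and>
     (\<forall>a\<in>D. f a \<in> P \<and> f a \<in> great_circle a \<and>
        f a \<notin> arc_set a \<and> - f a \<notin> arc_set a)"

definition k_oriented :: "arc set \<Rightarrow> nat \<Rightarrow> bool" where
  "k_oriented D k \<longleftrightarrow> (\<exists>P f. k_oriented_by D k P f)"

definition vanishing_points :: "(arc \<Rightarrow> point) \<Rightarrow> arc \<Rightarrow> point set" where
  "vanishing_points f a = {f a, - f a}"

end

theory Submission
  imports Defs
begin

lemma indep2:
  fixes x y :: point
  assumes "on_sphere x" "on_sphere y" "x \<noteq> y" "x \<noteq> - y"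
  shows "independent {x, y}"
proof -
  have y0: "y \<noteq> 0" using assms(2) by (auto simp: on_sphere_def)
  have "x \<notin> span {y}"
  proof
    assume "x \<in> span {y}"
    then obtain c where c: "x = c *\<^sub>R y" by (auto simp: span_singleton)
    then have "\<bar>c\<bar> = 1" using assms(1,2) by (simp add: on_sphere_def)
    then have "c = 1 \<or> c = -1" by linarith
    then show False using c assms(3,4) by auto
  qed
  then show ?thesis using y0 assms(3) by (simp add: independent_insert)
qed

lemma dim2:
  fixes x y :: point
  assumes "on_sphere x" "on_sphere y" "x \<noteq> y" "x \<noteq> - y"
  shows "dim (span {x, y}) = 2"
  using dim_span_eq_card_independent[OF indep2[OF assms]] assms(3) by simp

lemma circ_eq:
  fixes x p a1 a2 :: point
  assumes "on_sphere x" "on_sphere p" "x \<noteq> p" "x \<noteq> - p"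
    and "on_sphere a1" "on_sphere a2" "a1 \<noteq> a2" "a1 \<noteq> - a2"
    and "x \<in> span {a1, a2}" "p \<in> span {a1, a2}"
  shows "span {x, p} = span {a1, a2}"
proof -
  have "span {x, p} \<subseteq> span {a1, a2}"
    using assms(9,10) by (simp add: span_minimal)
  then show ?thesis
    using subspace_dim_equal[of "span {x,p}" "span {a1,a2}"] dim2[OF assms(1-4)] dim2[OF assms(5-8)]
    by simp
qed

lemma arc_sub: "arc_set a \<subseteq> great_circle a"
proof
  fix x assume "x \<in> arc_set a"
  then obtain u v where "on_sphere x" "x = u *\<^sub>R fst a + v *\<^sub>R snd a"
    by (auto simp: arc_set_def)
  moreover have "u *\<^sub>R fst a + v *\<^sub>R snd a \<in> span {fst a, snd a}"
    by (intro span_add span_mul span_base) auto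
  ultimately show "x \<in> great_circle a" by (simp add: great_circle_def)
qed

theorem mainTheorem9:
  assumes "k_oriented_by D k P f"
    and "a \<in> D" and "b \<in> D"
    and "great_circle a \<noteq> great_circle b"
    and "vanishing_points f a \<inter> vanishing_points f b \<noteq> {}"
  shows "great_circle a \<inter> arc_set b = {} \<and> great_circle b \<inter> arc_set a = {}"
proof -
  have sd: "spherical_diagram D" using assms(1) by (simp add: k_oriented_by_def)
  have ga: "geodesic_arc a" "geodesic_arc b" using sd assms(2,3) by (auto simp: spherical_diagram_def)
  have fa: "f a \<in> P" "f a \<in> great_circle a" "f a \<notin> arc_set a" "- f a \<notin> arc_set a"
    using assms(1,2) by (auto simp: k_oriented_by_def)
  have fb: "f b \<in> P" "f b \<in> great_circle b" "f b \<notin> arc_set b" "- f b \<notin> arc_set b"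
    using assms(1,3) by (auto simp: k_oriented_by_def)
  have anti: "\<forall>p\<in>P. \<forall>q\<in>P. p \<noteq> - q" using assms(1) by (simp add: k_oriented_by_def)
  have "f a = f b"
  proof -
    have "f a \<noteq> - f b" "- f a \<noteq> f b" using anti fa(1) fb(1) by auto
    then show ?thesis using assms(5) by (auto simp: vanishing_points_def)
  qed
  define p where "p = f a"
  have pa: "p \<in> great_circle a" and pb: "p \<in> great_circle b"
    using fa fb \<open>f a = f b\<close> by (auto simp: p_def)
  have key: "x = p \<or> x = - p" if "x \<in> great_circle a" "x \<in> great_circle b" for x
  proof (rule ccontr)
    assume "\<not> (x = p \<or> x = - p)"
    then have ne: "x \<noteq> p" "x \<noteq> - p" by auto
    have "span {x, p} = span {fst a, snd a}"
      using circ_eq[OF _ _ ne, of "fst a" "snd a"] that pa ga(1)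
      by (auto simp: great_circle_def geodesic_arc_def)
    moreover have "span {x, p} = span {fst b, snd b}"
      using circ_eq[OF _ _ ne, of "fst b" "snd b"] that pb ga(2)
      by (auto simp: great_circle_def geodesic_arc_def)
    ultimately have "great_circle a = great_circle b" by (simp add: great_circle_def)
    then show False using assms(4) by simp
  qed
  have 1: "great_circle a \<inter> arc_set b = {}"
  proof (rule equals0I)
    fix x assume "x \<in> great_circle a \<inter> arc_set b"
    then have "x \<in> great_circle a" "x \<in> great_circle b" "x \<in> arc_set b"
      using arc_sub[of b] by auto
    with key fb(3,4) \<open>f a = f b\<close> show False unfolding p_def by metis
  qed
  have 2: "great_circle b \<inter> arc_set a = {}"
  proof (rule equals0I)
    fix x assume "x \<in> great_circle b \<inter> arc_set a"
    then have "x \<in> great_circle a" "x \<in> great_circle b" "x \<in> arc_set a"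
      using arc_sub[of a] by auto
    with key fa(3,4) show False unfolding p_def by metis
  qed
  show ?thesis using 1 2 by simp
qed

end
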